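(* Let $\phi$ be a proper partial coloring of $G$, let $xy$ be an uncolored edge, and let $\beta\in M(\phi,y)\cup\{\mathsf{blank}\}$. Consider running the Random Fan procedure with parameter $k_{\max}$ on input $(\phi,xy,x,\beta)$, and let $T$ be the number of attempts that fail (i.e., reach $k=k_{\max}$ without returning) before the first successful attempt. If $k_{\max}\ge\frac{8(1+\epsilon)}{\epsilon(2-\epsilon)}$, then for every $t\ge 0$, \[\mathbb{P}[T\ge t]\le\exp\left(-\epsilon^2\,t\,k_{\max}/100\right).\]
   Context: $G$ is a finite simple graph of maximum degree $\Delta$, $\epsilon\in(0,1)$ with $\Delta\ge1/\epsilon$, and $q=(1+\epsilon)\Delta$ is assumed to be an integer; $[q]=\{1,\ldots,q\}$. A partial coloring is a map $\phi\colon E(G)\to[q]\cup\{\mathsf{blank}\}$ ($\mathsf{blank}$ = uncolored), proper if distinct colored edges sharing a vertex get distinct colors. $M(\phi,v)=[q]\setminus\{\phi(vw):vw\in E(G)\}$ is the set of colors missing at $v$. For a vertex $v$ and $\theta\in[q]\cup\{\mathsf{blank}\}$, "a random color from $M(\phi,v)\setminus\{\theta\}$" is obtained by repeatedly drawing $\eta\in[q]$ uniformly at random until $\eta\ne\theta$ and $\eta\in M(\phi,v)$ (so it is uniform on $M(\phi,v)\setminus\{\theta\}$). The Random Fan procedure with parameter $k_{\max}\in\mathbb{N}$ on input $(\phi,xy,x,\beta)$ performs independent attempts until one returns. An attempt: set $y_0=y$, $k=0$, $\theta=\beta$. While $k<k_{\max}$: choose a random color $\eta$ from $M(\phi,y_k)\setminus\{\theta\}$;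 set $\theta=\mathsf{blank}$; if $\eta\in M(\phi,x)$, return; else if $\eta=\beta$, return; else if $\eta\in M(\phi,y_{j-1})$ for some $1\le j\le k$, return; otherwise increase $k$ by one and let $y_k$ be the unique neighbor of $x$ with $\phi(xy_k)=\eta$ (appending the edge $xy_k$ to the fan). If the while loop ends because $k=k_{\max}$, the attempt fails and a new attempt is started from scratch. An attempt that returns is called successful. *)

theory Defs
  imports "HOL-Probability.Probability"
begin

definition simple_graph :: "'v set \<Rightarrow> 'v set set \<Rightarrow> bool" where
  "simple_graph V E \<longleftrightarrow> finite V \<and>
     (\<forall>e\<in>E. \<exists>u w. u \<noteq> w \<and> u \<in> V \<and> w \<in> V \<and> e = {u, w})"

definition degree :: "'v set set \<Rightarrow> 'v \<Rightarrow> nat" where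
  "degree E v = card {w. {v, w} \<in> E}"

definition max_degree :: "'v set \<Rightarrow> 'v set set \<Rightarrow> nat" where
  "max_degree V E = Max (degree E ` V)"

text \<open>Partial colorings: None = blank.\<close>
definition partial_coloring :: "'v set set \<Rightarrow> nat \<Rightarrow> ('v set \<Rightarrow> nat option) \<Rightarrow> bool" where
  "partial_coloring E q \<phi> \<longleftrightarrow> (\<forall>e\<in>E. \<phi> e = None \<or> (\<exists>c\<in>{1..q}. \<phi> e = Some c))"

definition proper_coloring :: "'v set set \<Rightarrow> nat \<Rightarrow> ('v set \<Rightarrow> nat option) \<Rightarrow> bool" where
  "proper_coloring E q \<phi> \<longleftrightarrow> partial_coloring E q \<phi> \<and>
     (\<forall>e\<in>E. \<forall>e'\<in>E. e \<noteq> e' \<and> e \<inter> e' \<noteq> {} \<and> \<phi> e \<noteq> None \<longrightarrow> \<phi> e \<noteq> \<phi> e')"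

definition missing :: "'v set set \<Rightarrow> nat \<Rightarrow> ('v set \<Rightarrow> nat option) \<Rightarrow> 'v \<Rightarrow> nat set" where
  "missing E q \<phi> v = {1..q} - {c. \<exists>w. {v, w} \<in> E \<and> \<phi> {v, w} = Some c}"

text \<open>Remainder of one attempt of Random Fan. Fuel n = k_max - k; ys = [y_0,...,y_k];
  th = current theta. Result True = the attempt fails (while loop ends with k = k_max),
  False = the attempt returns (successful).\<close>
fun fan_run :: "nat \<Rightarrow> 'v set set \<Rightarrow> nat \<Rightarrow> ('v set \<Rightarrow> nat option) \<Rightarrow> 'v \<Rightarrow> nat option
    \<Rightarrow> 'v list \<Rightarrow> nat option \<Rightarrow> bool pmf" where
  "fan_run 0 E q \<phi> x \<beta> ys th = return_pmf True"
| "fan_run (Suc n) E q \<phi> x \<beta> ys th =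
     bind_pmf (pmf_of_set (missing E q \<phi> (last ys) - set_option th)) (\<lambda>\<eta>.
       if \<eta> \<in> missing E q \<phi> x \<or> Some \<eta> = \<beta> \<or>
          (\<exists>j < length ys - 1. \<eta> \<in> missing E q \<phi> (ys ! j))
       then return_pmf False
       else fan_run n E q \<phi> x \<beta> (ys @ [THE w. {x, w} \<in> E \<and> \<phi> {x, w} = Some \<eta>]) None)"

definition fan_attempt :: "nat \<Rightarrow> 'v set set \<Rightarrow> nat \<Rightarrow> ('v set \<Rightarrow> nat option) \<Rightarrow> 'v \<Rightarrow> 'v
    \<Rightarrow> nat option \<Rightarrow> bool pmf" where
  "fan_attempt kmax E q \<phi> x y \<beta> = fan_run kmax E q \<phi> x \<beta> [y] \<beta>"

text \<open>Given an attempt distribution A (True = fail), first_fail n A is True exactly when the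
  first n independent attempts all fail, i.e. the event T >= n where T is the number of failed
  attempts before the first successful one.\<close>
fun first_fail :: "nat \<Rightarrow> bool pmf \<Rightarrow> bool pmf" where
  "first_fail 0 A = return_pmf True"
| "first_fail (Suc n) A = bind_pmf A (\<lambda>f. if f then first_fail n A else return_pmf False)"

end

theory Submission
  imports Defs
begin

lemma present_card:
  assumes sg: "simple_graph V E"
  shows "card ({1..q} - missing E q \<phi> v) \<le> max_degree V E"
proof -
  let ?N = "{w. {v, w} \<in> E}"
  have finV: "finite V" using sg unfolding simple_graph_def by auto
  have NV: "?N \<subseteq> V"
  proof
    fix w assume "w \<in> ?N"
    then have "{v,w} \<in> E" by simp
    then obtain a b where "a \<in> V" "b \<in> V" "{v,w} = {a,b}" using sg unfolding simple_graph_def by blast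
    then show "w \<in> V" by (metis doubleton_eq_iff)
  qed
  have finN: "finite ?N" using finV NV finite_subset by blast
  have sub: "{1..q} - missing E q \<phi> v \<subseteq> (\<lambda>w. the (\<phi> {v, w})) ` ?N"
  proof
    fix c assume "c \<in> {1..q} - missing E q \<phi> v"
    then obtain w where "{v,w} \<in> E" "\<phi> {v,w} = Some c" by (auto simp: missing_def)
    then show "c \<in> (\<lambda>w. the (\<phi> {v, w})) ` ?N" by (intro image_eqI[of _ _ w]) auto
  qed
  have "card ({1..q} - missing E q \<phi> v) \<le> card ?N"
    using card_mono[OF finite_imageI[OF finN] sub] card_image_le[OF finN, of "\<lambda>w. the (\<phi> {v, w})"] by linarith
  moreover have "card ?N \<le> max_degree V E"
  proof (cases "v \<in> V")
    case True
    then show ?thesis unfolding max_degree_def degree_def using finV by (simp add: Max_ge)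
  next
    case False
    have "?N = {}"
    proof (rule ccontr)
      assume "?N \<noteq> {}"
      then obtain w where "{v,w} \<in> E" by blast
      then obtain a b where "a \<in> V" "b \<in> V" "{v,w} = {a,b}" using sg unfolding simple_graph_def by blast
      then show False using False by (metis doubleton_eq_iff)
    qed
    then show ?thesis by simp
  qed
  ultimately show ?thesis by linarith
qed

lemma missing_card:
  assumes sg: "simple_graph V E"
  shows "real (card (missing E q \<phi> v)) \<ge> real q - real (max_degree V E)"
proof -
  have s: "missing E q \<phi> v \<subseteq> {1..q}" unfolding missing_def by auto
  have "card ({1..q} - missing E q \<phi> v) = q - card (missing E q \<phi> v)"
    using card_Diff_subset[OF finite_subset[OF s] s] by simp
  moreover have "card (missing E q \<phi> v) \<le> q" using card_mono[OF _ s] by simp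
  ultimately show ?thesis using present_card[OF sg, of q \<phi> v] by linarith
qed

lemma first_fail_pmf: "pmf (first_fail n A) True = (pmf A True) ^ n"
proof (induction n)
  case 0 then show ?case by simp
next
  case (Suc n)
  have "pmf (first_fail (Suc n) A) True = (\<integral>f. pmf (if f then first_fail n A else return_pmf False) True \<partial>measure_pmf A)"
    by (simp add: pmf_bind)
  also have "\<dots> = (\<Sum>a\<in>UNIV. pmf (if a then first_fail n A else return_pmf False) True * pmf A a)"
    by (rule integral_measure_pmf_real) auto
  also have "\<dots> = pmf (first_fail n A) True * pmf A True"
    by (simp add: UNIV_bool)
  finally show ?case using Suc by simp
qed

definition Ub :: "'v set set \<Rightarrow> nat \<Rightarrow> ('v set \<Rightarrow> nat option) \<Rightarrow> 'v \<Rightarrow> 'v list \<Rightarrow> nat set" where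
  "Ub E q \<phi> x ys = missing E q \<phi> x \<union> (\<Union>j\<in>{..<length ys - 1}. missing E q \<phi> (ys ! j))"

lemma u_exp_le: "(u::real) * exp (1 - u) \<le> 1"
proof -
  have "u \<le> exp (u - 1)" using exp_ge_add_one_self[of "u - 1"] by simp
  then have "u * exp (1 - u) \<le> exp (u - 1) * exp (1 - u)" by (intro mult_right_mono) auto
  also have "\<dots> = 1" by (simp add: exp_add[symmetric])
  finally show ?thesis .
qed

lemma run_bound:
  assumes sg: "simple_graph V E" and Dpos: "D > 0"
    and Dle: "D \<le> real q - real (max_degree V E)"
  shows "ys \<noteq> [] \<Longrightarrow> pmf (fan_run n E q \<phi> x \<beta> ys None) True
          \<le> exp (real (card ({1..q} - Ub E q \<phi> x ys)) / D - real n)"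
proof (induction n arbitrary: ys)
  case 0
  then show ?case using Dpos by simp
next
  case (Suc n)
  define S where "S = missing E q \<phi> (last ys)"
  define ret where "ret = (\<lambda>\<eta>. \<eta> \<in> missing E q \<phi> x \<or> Some \<eta> = \<beta> \<or>
          (\<exists>j < length ys - 1. \<eta> \<in> missing E q \<phi> (ys ! j)))"
  define W where "W = (\<lambda>\<eta>. THE w. {x, w} \<in> E \<and> \<phi> {x, w} = Some \<eta>)"
  define f where "f = (\<lambda>\<eta>. if ret \<eta> then return_pmf False
       else fan_run n E q \<phi> x \<beta> (ys @ [W \<eta>]) None)"
  define C where "C = {\<eta>\<in>S. \<not> ret \<eta>}"
  define U where "U = {1..q} - Ub E q \<phi> x ys"
  define R where "R = card U"
  define c where "c = card C"
  define B where "B = exp ((real R - real c) / D - real n)"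
  have Ssub: "S \<subseteq> {1..q}" unfolding S_def missing_def by auto
  have finS: "finite S" using finite_subset[OF Ssub] by simp
  have cardS: "real (card S) \<ge> D" using missing_card[OF sg, of q \<phi> "last ys"] Dle S_def by simp
  have Sne: "S \<noteq> {}" using cardS Dpos by auto
  have finU: "finite U" unfolding U_def by simp
  have CU: "C \<subseteq> U"
    unfolding C_def U_def Ub_def ret_def using Ssub by auto
  have cR: "c \<le> R" unfolding c_def R_def using card_mono[OF finU CU] .
  have run_eq: "fan_run (Suc n) E q \<phi> x \<beta> ys None = bind_pmf (pmf_of_set S) f"
    unfolding S_def f_def ret_def W_def by simp
  have each: "pmf (f \<eta>) True \<le> (if \<eta> \<in> C then B else 0)" if "\<eta> \<in> S" for \<eta>
  proof (cases "ret \<eta>")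
    case True
    then show ?thesis unfolding f_def B_def by simp
  next
    case False
    let ?ys = "ys @ [W \<eta>]"
    have inC: "\<eta> \<in> C" using False that unfolding C_def by simp
    have "S \<subseteq> Ub E q \<phi> x ?ys"
    proof -
      have "last ys = ys ! (length ys - 1)" using Suc.prems by (simp add: last_conv_nth)
      moreover have "length ys - 1 < length ?ys - 1" using Suc.prems by (cases ys) auto
      moreover have "?ys ! (length ys - 1) = ys ! (length ys - 1)" using Suc.prems
        by (simp add: nth_append)
      ultimately have "missing E q \<phi> (last ys) \<subseteq> (\<Union>j\<in>{..<length ?ys - 1}. missing E q \<phi> (?ys ! j))"
      proof -
        assume a1: "last ys = ys ! (length ys - 1)" and a2: "length ys - 1 < length ?ys - 1"
          and a3: "?ys ! (length ys - 1) = ys ! (length ys - 1)"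
        have "missing E q \<phi> (?ys ! (length ys - 1)) \<subseteq> (\<Union>j\<in>{..<length ?ys - 1}. missing E q \<phi> (?ys ! j))"
          using a2 by (intro UN_upper) simp
        then show ?thesis using a1 a3 by simp
      qed
      then show ?thesis unfolding S_def Ub_def by blast
    qed
    moreover have "Ub E q \<phi> x ys \<subseteq> Ub E q \<phi> x ?ys"
      unfolding Ub_def by (auto simp: nth_append)
    ultimately have "{1..q} - Ub E q \<phi> x ?ys \<subseteq> U - C"
      unfolding U_def C_def by auto
    then have "card ({1..q} - Ub E q \<phi> x ?ys) \<le> card (U - C)"
      using finU by (intro card_mono) auto
    also have "card (U - C) = R - c" unfolding R_def c_def using card_Diff_subset[OF finite_subset[OF CU finU] CU] .
    finally have "real (card ({1..q} - Ub E q \<phi> x ?ys)) \<le> real R - real c" using cR by linarith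
    then have "exp (real (card ({1..q} - Ub E q \<phi> x ?ys)) / D - real n) \<le> B"
      unfolding B_def using Dpos by (simp add: divide_right_mono)
    moreover have "pmf (f \<eta>) True = pmf (fan_run n E q \<phi> x \<beta> ?ys None) True"
      unfolding f_def using False by simp
    ultimately show ?thesis using Suc.IH[of ?ys] inC by simp
  qed
  have "pmf (fan_run (Suc n) E q \<phi> x \<beta> ys None) True = (\<Sum>\<eta>\<in>S. pmf (f \<eta>) True) / real (card S)"
    unfolding run_eq by (rule pmf_bind_pmf_of_set[OF Sne finS])
  also have "\<dots> \<le> (\<Sum>\<eta>\<in>S. (if \<eta> \<in> C then B else 0)) / real (card S)"
    by (intro divide_right_mono sum_mono each) auto
  also have "(\<Sum>\<eta>\<in>S. (if \<eta> \<in> C then B else 0)) = real c * B"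
  proof -
    have "(\<Sum>\<eta>\<in>S. (if \<eta> \<in> C then B else 0)) = (\<Sum>\<eta>\<in>{\<eta>\<in>S. \<eta> \<in> C}. B)"
      using sum.inter_filter[OF finS, of "\<lambda>_. B" "\<lambda>\<eta>. \<eta> \<in> C"] by simp
    also have "{\<eta>\<in>S. \<eta> \<in> C} = C" unfolding C_def by auto
    finally show ?thesis unfolding c_def by simp
  qed
  also have "real c * B / real (card S) \<le> real c * B / D"
    using cardS Dpos unfolding B_def by (intro divide_left_mono) auto
  also have "real c * B / D = (real c / D * exp (1 - real c / D)) * exp (real R / D - real (Suc n))"
    unfolding B_def by (simp add: exp_add[symmetric] field_simps diff_divide_distrib)
  also have "\<dots> \<le> 1 * exp (real R / D - real (Suc n))"
    by (intro mult_right_mono u_exp_le) auto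
  finally show ?case unfolding R_def U_def by simp
qed


lemma pmf_bind_le:
  assumes "\<And>\<eta>. \<eta> \<in> set_pmf p \<Longrightarrow> pmf (g \<eta>) a \<le> B"
  shows "pmf (bind_pmf p g) a \<le> B"
  unfolding pmf_bind
  by (rule measure_pmf.integral_le_const)
     (auto simp: AE_measure_pmf_iff assms pmf_le_1 intro!: measure_pmf.integrable_const_bound[where B=1])

lemma attempt_bound:
  assumes sg: "simple_graph V E" and Dpos: "D > 0"
    and Dle: "D \<le> real q - real (max_degree V E)"
  shows "pmf (fan_attempt (Suc n) E q \<phi> x y \<beta>) True \<le> exp (real (max_degree V E) / D - real n)"
proof -
  have "pmf (fan_run (Suc n) E q \<phi> x \<beta> [y] \<beta>) True \<le> exp (real (max_degree V E) / D - real n)"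
    unfolding fan_run.simps
  proof (rule pmf_bind_le)
    fix \<eta>
    let ?ys = "[y] @ [THE w. {x, w} \<in> E \<and> \<phi> {x, w} = Some \<eta>]"
    have "card ({1..q} - Ub E q \<phi> x ?ys) \<le> card ({1..q} - missing E q \<phi> x)"
      by (intro card_mono) (auto simp: Ub_def)
    also have "\<dots> \<le> max_degree V E" by (rule present_card[OF sg])
    finally have "exp (real (card ({1..q} - Ub E q \<phi> x ?ys)) / D - real n) \<le> exp (real (max_degree V E) / D - real n)"
      using Dpos by (simp add: divide_right_mono)
    moreover have "pmf (fan_run n E q \<phi> x \<beta> ?ys None) True \<le> exp (real (card ({1..q} - Ub E q \<phi> x ?ys)) / D - real n)"
      using run_bound[OF sg Dpos Dle, of ?ys n \<phi> x \<beta>] by simp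
    ultimately have "pmf (fan_run n E q \<phi> x \<beta> ?ys None) True \<le> exp (real (max_degree V E) / D - real n)"
      by (rule order_trans[rotated])
    then show "pmf (if \<eta> \<in> missing E q \<phi> x \<or> Some \<eta> = \<beta> \<or>
          (\<exists>j < length [y] - 1. \<eta> \<in> missing E q \<phi> ([y] ! j))
       then return_pmf False
       else fan_run n E q \<phi> x \<beta> ([y] @ [THE w. {x, w} \<in> E \<and> \<phi> {x, w} = Some \<eta>]) None) True
        \<le> exp (real (max_degree V E) / D - real n)" by simp
  qed
  then show ?thesis unfolding fan_attempt_def .
qed

theorem proposition5p1:
  fixes V :: "'v set" and E :: "'v set set" and \<epsilon> :: real and q kmax :: nat
    and \<phi> :: "'v set \<Rightarrow> nat option" and x y :: 'v and \<beta> :: "nat option" and t :: real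
  assumes "simple_graph V E"
    and "0 < \<epsilon>" and "\<epsilon> < 1"
    and "real (max_degree V E) \<ge> 1 / \<epsilon>"
    and "real q = (1 + \<epsilon>) * real (max_degree V E)"
    and "proper_coloring E q \<phi>"
    and "{x, y} \<in> E" and "\<phi> {x, y} = None"
    and "\<beta> = None \<or> (\<exists>c \<in> missing E q \<phi> y. \<beta> = Some c)"
    and "real kmax \<ge> 8 * (1 + \<epsilon>) / (\<epsilon> * (2 - \<epsilon>))"
    and "t \<ge> 0"
  shows "measure_pmf.prob (first_fail (nat \<lceil>t\<rceil>) (fan_attempt kmax E q \<phi> x y \<beta>)) {True}
           \<le> exp (- (\<epsilon>^2 * t * real kmax / 100))"
proof -
  note sg = assms(1) and e0 = assms(2) and e1 = assms(3) and Dge = assms(4) and qdef = assms(5)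
    and kge = assms(10) and t0 = assms(11)
  define \<Delta> where "\<Delta> = real (max_degree V E)"
  define D where "D = \<epsilon> * \<Delta>"
  have "\<epsilon> * \<Delta> \<ge> \<epsilon> * (1 / \<epsilon>)" unfolding \<Delta>_def using Dge e0 by (intro mult_left_mono) auto
  then have D1: "D \<ge> 1" unfolding D_def using e0 by simp
  have Dle: "D \<le> real q - real (max_degree V E)" unfolding D_def \<Delta>_def qdef by (simp add: algebra_simps)
  have "8 * (1 + \<epsilon>) / (\<epsilon> * (2 - \<epsilon>)) \<ge> 4 / \<epsilon>"
    using e0 e1 by (simp add: field_simps)
  then have k4: "real kmax \<ge> 4 / \<epsilon>" using kge by linarith
  have "4 / \<epsilon> > 4" using e0 e1 by (simp add: field_simps)
  then have "kmax > 0" using k4 by linarith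
  then obtain n where kn: "kmax = Suc n" using gr0_implies_Suc by blast
  define A where "A = fan_attempt kmax E q \<phi> x y \<beta>"
  define L where "L = real n - 1 / \<epsilon>"
  have "\<Delta> / D = 1 / \<epsilon>" unfolding D_def using D1 D_def e0 by (auto simp: field_simps)
  then have pA: "pmf A True \<le> exp (- L)"
    using attempt_bound[OF sg _ Dle, of n \<phi> x y \<beta>] D1 unfolding A_def kn L_def \<Delta>_def by simp
  have e2: "\<epsilon>^2 \<le> \<epsilon>" using e0 e1 by (simp add: power2_eq_square)
  have "\<epsilon>^2 * real kmax / 100 \<le> \<epsilon> * real kmax / 100"
    using e2 by (intro divide_right_mono mult_right_mono) auto
  also have "\<dots> \<le> real kmax / 100" using e1 e0 by (intro divide_right_mono mult_left_le_one_le) auto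
  finally have Lk: "\<epsilon>^2 * real kmax / 100 \<le> L"
  proof -
    assume h: "\<epsilon>^2 * real kmax / 100 \<le> real kmax / 100"
    have "1 / \<epsilon> \<le> real kmax / 4" using k4 e0 by (simp add: field_simps)
    moreover have "1 \<le> real kmax / 4" using k4 \<open>4 / \<epsilon> > 4\<close> by linarith
    moreover have "real kmax = real n + 1" using kn by simp
    ultimately show ?thesis using h unfolding L_def by linarith
  qed
  have L0: "L \<ge> 0" using Lk e0 by (smt (verit) divide_nonneg_nonneg mult_nonneg_nonneg of_nat_0_le_iff zero_le_power2)
  have "measure_pmf.prob (first_fail (nat \<lceil>t\<rceil>) A) {True} = (pmf A True) ^ nat \<lceil>t\<rceil>"
    by (simp add: measure_pmf_single first_fail_pmf)
  also have "\<dots> \<le> exp (- L) ^ nat \<lceil>t\<rceil>" using pA by (intro power_mono) auto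
  also have "\<dots> = exp (- (L * real (nat \<lceil>t\<rceil>)))" by (simp add: exp_of_nat_mult[symmetric] mult.commute)
  also have "\<dots> \<le> exp (- (L * t))"
  proof -
    have "t \<le> real (nat \<lceil>t\<rceil>)" using t0 by linarith
    then have "L * t \<le> L * real (nat \<lceil>t\<rceil>)" using L0 by (intro mult_left_mono) auto
    then show ?thesis by simp
  qed
  also have "\<dots> \<le> exp (- (\<epsilon>^2 * t * real kmax / 100))"
  proof -
    have "(\<epsilon>^2 * real kmax / 100) * t \<le> L * t" using Lk t0 by (intro mult_right_mono) auto
    then show ?thesis by (simp add: algebra_simps)
  qed
  finally show ?thesis unfolding A_def .
qed

end
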